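(* Let $k=\mathbb R$ or $\mathbb C$, let $(E,g)$ be a finite-dimensional inner product vector space over $k$, let $f\in\operatorname{End}_k(E)$, and let $\mathcal H_f=\{H_1,\dots,H_n\}$ be a family of $f$-invariant subspaces of $E$ with $E=H_1\oplus\dots\oplus H_n$ and $H_i\subseteq\big[\sum_{j\ne i}H_j\big]^\perp$ for all $i\in\{1,\dots,n\}$. Then $f^+_{\mathcal H_f}=f^\dagger$.
   Context: An inner product is linear in the first argument, conjugate-symmetric and positive definite; $U^\perp=\{e\in E:g(u,e)=0\ \forall u\in U\}$. For $f\in\operatorname{End}_k(E)$, its Moore-Penrose inverse $f^\dagger\in\operatorname{End}_k(E)$ is the linear map equal to $(f|_{[\operatorname{Ker} f]^\perp})^{-1}$ on $\operatorname{Im} f$ and to $0$ on $[\operatorname{Im} f]^\perp$. With $f_i=f|_{H_i}\in\operatorname{End}_k(H_i)$ and $H_i$ carrying the restricted inner product, $f^+_{\mathcal H_f}$ is the unique endomorphism of $E$ with $f^+_{\mathcal H_f}|_{H_i}=f_i^\dagger$ for each $i$. *)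

theory Defs
  imports Complex_Main
begin

text \<open>The scalar field k is R or C (as a real algebra), with cj its conjugation:
  either every scalar is real and cj is the identity, or k = R + iR with i*i = -1
  and cj the usual complex conjugation.\<close>
definition RorC :: "('k::real_field \<Rightarrow> 'k) \<Rightarrow> bool" where
  "RorC cj \<longleftrightarrow>
     ((\<forall>x::'k. \<exists>r. x = of_real r) \<and> (\<forall>x. cj x = x)) \<or>
     (\<exists>\<iota>::'k. \<iota> * \<iota> = -1 \<and> (\<forall>x. \<exists>a b. x = of_real a + \<iota> * of_real b) \<and>
        (\<forall>a b. cj (of_real a + \<iota> * of_real b) = of_real a - \<iota> * of_real b))"

definition inner_product_space ::
  "('k::real_field \<Rightarrow> 'v::ab_group_add \<Rightarrow> 'v) \<Rightarrow> ('k \<Rightarrow> 'k) \<Rightarrow> ('v \<Rightarrow> 'v \<Rightarrow> 'k) \<Rightarrow> bool" where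
  "inner_product_space scale cj g \<longleftrightarrow> vector_space scale \<and>
     (\<forall>a u v w. g (scale a u + v) w = a * g u w + g v w) \<and>
     (\<forall>u v. g u v = cj (g v u)) \<and>
     (\<forall>e. e \<noteq> 0 \<longrightarrow> (\<exists>r>0. g e e = of_real r))"

definition orth_in :: "('v \<Rightarrow> 'v \<Rightarrow> 'k::zero) \<Rightarrow> 'v set \<Rightarrow> 'v set \<Rightarrow> 'v set" where
  "orth_in g S U = {e \<in> S. \<forall>u\<in>U. g u e = 0}"

definition ker_in :: "'v set \<Rightarrow> ('v \<Rightarrow> 'v::zero) \<Rightarrow> 'v set" where
  "ker_in S f = {x \<in> S. f x = 0}"

definition linear_on :: "('k \<Rightarrow> 'v::ab_group_add \<Rightarrow> 'v) \<Rightarrow> 'v set \<Rightarrow> ('v \<Rightarrow> 'v) \<Rightarrow> bool" where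
  "linear_on scale S h \<longleftrightarrow>
     (\<forall>a x y. x \<in> S \<longrightarrow> y \<in> S \<longrightarrow> h (scale a x + y) = scale a (h x) + h y)"

text \<open>Moore-Penrose inverse of the endomorphism f|_S of the subspace S (with the restricted
  inner product): the linear map on S equal to (f restricted to Ker-perp)^{-1} on Im f and 0 on (Im f)-perp;
  normalised to be 0 outside S.\<close>
definition MP_inverse_on ::
  "('k::zero \<Rightarrow> 'v::ab_group_add \<Rightarrow> 'v) \<Rightarrow> ('v \<Rightarrow> 'v \<Rightarrow> 'k) \<Rightarrow> 'v set \<Rightarrow> ('v \<Rightarrow> 'v) \<Rightarrow> ('v \<Rightarrow> 'v)" where
  "MP_inverse_on scale g S f = (THE h. linear_on scale S h \<and> (\<forall>x. x \<notin> S \<longrightarrow> h x = 0) \<and>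
      (\<forall>y \<in> f ` S. h y \<in> orth_in g S (ker_in S f) \<and> f (h y) = y) \<and>
      (\<forall>y \<in> orth_in g S (f ` S). h y = 0))"

definition MP_inverse ::
  "('k::zero \<Rightarrow> 'v::ab_group_add \<Rightarrow> 'v) \<Rightarrow> ('v \<Rightarrow> 'v \<Rightarrow> 'k) \<Rightarrow> ('v \<Rightarrow> 'v) \<Rightarrow> ('v \<Rightarrow> 'v)" where
  "MP_inverse scale g f = MP_inverse_on scale g UNIV f"

definition sum_subspaces :: "(nat \<Rightarrow> 'v::comm_monoid_add set) \<Rightarrow> nat set \<Rightarrow> 'v set" where
  "sum_subspaces H I = {sum x I | x. \<forall>i\<in>I. x i \<in> H i}"

definition is_direct_sum :: "(nat \<Rightarrow> 'v::comm_monoid_add set) \<Rightarrow> nat set \<Rightarrow> bool" where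
  "is_direct_sum H I \<longleftrightarrow>
     (\<forall>e. \<exists>x. (\<forall>i\<in>I. x i \<in> H i) \<and> e = sum x I) \<and>
     (\<forall>x y. (\<forall>i\<in>I. x i \<in> H i \<and> y i \<in> H i) \<longrightarrow> sum x I = sum y I \<longrightarrow> (\<forall>i\<in>I. x i = y i))"

definition adapted_inverse ::
  "('k::field \<Rightarrow> 'v::ab_group_add \<Rightarrow> 'v) \<Rightarrow> ('v \<Rightarrow> 'v \<Rightarrow> 'k) \<Rightarrow> ('v \<Rightarrow> 'v) \<Rightarrow> (nat \<Rightarrow> 'v set) \<Rightarrow> nat set \<Rightarrow> ('v \<Rightarrow> 'v)" where
  "adapted_inverse scale g f H I = (THE h. Vector_Spaces.linear scale scale h \<and>
      (\<forall>i\<in>I. \<forall>x\<in>H i. h x = MP_inverse_on scale g (H i) f x))"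

end

theory Submission
  imports Defs
begin

locale ips = finite_dimensional_vector_space scale Bas
  for scale :: "'k::real_field \<Rightarrow> 'v::ab_group_add \<Rightarrow> 'v" (infixr \<open>*s\<close> 75) and Bas +
  fixes cj :: "'k \<Rightarrow> 'k" and g :: "'v \<Rightarrow> 'v \<Rightarrow> 'k"
  assumes glin: "g (a *s u + v) w = a * g u w + g v w"
    and gsym: "g u v = cj (g v u)"
    and gpos: "e \<noteq> 0 \<Longrightarrow> \<exists>r>0. g e e = of_real r"
begin

lemma g0l[simp]: "g 0 w = 0"
  using glin[of 1 0 0 w] by simp

lemma cj0[simp]: "cj 0 = 0"
  using gsym[of 0 0] by simp

lemma g0r[simp]: "g w 0 = 0"
  using gsym[of w 0] by simp

lemma g_scale: "g (a *s u) w = a * g u w"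
  using glin[of a u 0 w] by simp

lemma g_add: "g (u + v) w = g u w + g v w"
  using glin[of 1 u v w] by simp

lemma g_diff: "g (u - v) w = g u w - g v w"
proof -
  have "u - v = (-1) *s v + u" by simp
  then show ?thesis using glin[of "-1" v u w] by simp
qed

lemma g_sum: "g (sum f A) w = (\<Sum>a\<in>A. g (f a) w)"
  by (induct A rule: infinite_finite_induct) (simp_all add: g_add)

lemma flip: "g u v = 0 \<Longrightarrow> g v u = 0"
  using gsym[of v u] by simp

lemma gself: "g e e = 0 \<Longrightarrow> e = 0"
  using gpos[of e] by force

definition orthset :: "'v set \<Rightarrow> 'v set" where
  "orthset U = {e. \<forall>u\<in>U. g u e = 0}"

lemma subspace_orthset: "subspace (orthset U)"
  unfolding subspace_def orthset_def
proof (intro conjI ballI allI; clarsimp)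
  fix x y u assume x: "\<forall>u\<in>U. g u x = 0" and y: "\<forall>u\<in>U. g u y = 0" and u: "u \<in> U"
  have "g (x + y) u = 0" using flip x y u by (simp add: g_add)
  then show "g u (x + y) = 0" by (rule flip)
next
  fix c x u assume x: "\<forall>u\<in>U. g u x = 0" and u: "u \<in> U"
  have "g (c *s x) u = 0" using flip x u by (simp add: g_scale)
  then show "g u (c *s x) = 0" by (rule flip)
qed

lemma subspace_lorth: "subspace {v. g v w = 0}"
  unfolding subspace_def by (simp add: g_add g_scale)

lemma GS: "finite B \<Longrightarrow> \<exists>u\<in>span B. \<forall>b\<in>B. g b (x - u) = 0"
proof (induct B arbitrary: x rule: finite_induct)
  case empty
  then show ?case by (auto intro: span_zero)
next
  case (insert b B)
  obtain ub where ub: "ub \<in> span B" "\<forall>c\<in>B. g c (b - ub) = 0" using insert.hyps(3) by blast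
  obtain u where u: "u \<in> span B" "\<forall>c\<in>B. g c (x - u) = 0" using insert.hyps(3) by blast
  define b' where "b' = b - ub"
  define x' where "x' = x - u"
  have spI: "span B \<subseteq> span (insert b B)" by (rule span_mono) auto
  show ?case
  proof (cases "b' = 0")
    case True
    then have "b \<in> span B" using ub b'_def by simp
    moreover have "span B \<subseteq> {v. g v (x - u) = 0}"
      using u(2) by (intro span_minimal subspace_lorth) auto
    ultimately show ?thesis using u spI by blast
  next
    case False
    define c where "c = g x' b' / g b' b'"
    have nz: "g b' b' \<noteq> 0" using False gself by blast
    define x'' where "x'' = x' - c *s b'"
    have ob: "g x'' b' = 0" unfolding x''_def c_def using nz by (simp add: g_diff g_scale)
    have oB: "g d x'' = 0" if "d \<in> B" for d
    proof -
      have "g x' d = 0" using u(2) that flip x'_def by blast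
      moreover have "g b' d = 0" using ub(2) that flip b'_def by blast
      ultimately have "g x'' d = 0" unfolding x''_def by (simp add: g_diff g_scale)
      then show ?thesis by (rule flip)
    qed
    have sub: "span (insert b' B) \<subseteq> {v. g v x'' = 0}"
      using oB flip[OF ob] by (intro span_minimal subspace_lorth) auto
    have "b = b' + ub" using b'_def by simp
    moreover have "b' \<in> span (insert b' B)" by (simp add: span_base)
    moreover have "ub \<in> span (insert b' B)" using ub(1) span_mono[of B "insert b' B"] by blast
    ultimately have "b \<in> span (insert b' B)" by (simp add: span_add)
    then have gb: "g b x'' = 0" using sub by blast
    have "ub \<in> span (insert b B)" using ub(1) spI by blast
    then have "b' \<in> span (insert b B)" unfolding b'_def by (simp add: span_diff span_base)
    then have "u + c *s b' \<in> span (insert b B)" using u(1) spI by (simp add: span_add span_scale subset_iff)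
    moreover have "x - (u + c *s b') = x''" unfolding x''_def x'_def by (simp add: algebra_simps)
    ultimately show ?thesis using gb oB by (metis insert_iff)
  qed
qed

lemma decomp: "subspace U \<Longrightarrow> \<exists>u\<in>U. \<forall>v\<in>U. g v (x - u) = 0"
proof -
  assume U: "subspace U"
  obtain B where B: "B \<subseteq> U" "independent B" "U \<subseteq> span B" by (rule basis_exists)
  have fin: "finite B" using B(2) finiteI_independent by blast
  have eq: "span B = U" using B U span_minimal by blast
  obtain u where u: "u \<in> span B" "\<forall>b\<in>B. g b (x - u) = 0" using GS[OF fin] by blast
  have "span B \<subseteq> {v. g v (x - u) = 0}" using u(2) by (intro span_minimal subspace_lorth) auto
  then show ?thesis using u eq by blast
qed

lemma decomp_unique:
  assumes U: "subspace U" and "u1 \<in> U" "u2 \<in> U"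
    and "\<forall>v\<in>U. g v (x - u1) = 0" "\<forall>v\<in>U. g v (x - u2) = 0"
  shows "u1 = u2"
proof -
  have d: "u1 - u2 \<in> U" using assms subspace_diff by blast
  have "g (x - u2) (u1 - u2) = 0" "g (x - u1) (u1 - u2) = 0" using assms d flip by blast+
  then have "g ((x - u2) - (x - u1)) (u1 - u2) = 0" by (simp add: g_diff)
  then have "g (u1 - u2) (u1 - u2) = 0" by simp
  then show ?thesis using gself[of "u1 - u2"] by simp
qed

lemma orth_in_eq: "orth_in g S U = S \<inter> orthset U"
  unfolding orth_in_def orthset_def by auto

definition pr :: "'v set \<Rightarrow> 'v \<Rightarrow> 'v" where
  "pr U x = (SOME u. u \<in> U \<and> (\<forall>v\<in>U. g v (x - u) = 0))"

lemma pr_prop: "subspace U \<Longrightarrow> pr U x \<in> U \<and> x - pr U x \<in> orthset U"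
proof -
  assume U: "subspace U"
  obtain u where "u \<in> U \<and> (\<forall>v\<in>U. g v (x - u) = 0)" using decomp[OF U, of x] by blast
  then have "pr U x \<in> U \<and> (\<forall>v\<in>U. g v (x - pr U x) = 0)"
    unfolding pr_def by (rule someI[where P="\<lambda>u. u \<in> U \<and> (\<forall>v\<in>U. g v (x - u) = 0)"])
  then show ?thesis unfolding orthset_def by auto
qed

lemma pr_eq: "subspace U \<Longrightarrow> u \<in> U \<Longrightarrow> x - u \<in> orthset U \<Longrightarrow> pr U x = u"
  using pr_prop[of U x] decomp_unique[of U "pr U x" u x] unfolding orthset_def by auto

lemma pr_lin: assumes U: "subspace U" shows "pr U (a *s x + y) = a *s pr U x + pr U y"
proof (rule pr_eq[OF U])
  show "a *s pr U x + pr U y \<in> U" using pr_prop[OF U] U by (simp add: subspace_add subspace_scale)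
  have "a *s (x - pr U x) + (y - pr U y) \<in> orthset U"
    using pr_prop[OF U] subspace_orthset by (simp add: subspace_add subspace_scale)
  moreover have "a *s (x - pr U x) + (y - pr U y) = a *s x + y - (a *s pr U x + pr U y)"
    by (simp add: algebra_simps)
  ultimately show "a *s x + y - (a *s pr U x + pr U y) \<in> orthset U" by simp
qed

definition mp_ok :: "'v set \<Rightarrow> ('v \<Rightarrow> 'v) \<Rightarrow> ('v \<Rightarrow> 'v) \<Rightarrow> bool" where
  "mp_ok S f h \<longleftrightarrow> linear_on scale S h \<and> (\<forall>x. x \<notin> S \<longrightarrow> h x = 0) \<and>
      (\<forall>y \<in> f ` S. h y \<in> orth_in g S (ker_in S f) \<and> f (h y) = y) \<and>
      (\<forall>y \<in> orth_in g S (f ` S). h y = 0)"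

lemma lin_facts:
  assumes "Vector_Spaces.linear scale scale f"
  shows "f (x + y) = f x + f y" "f (c *s x) = c *s f x" "f 0 = 0" "f (x - y) = f x - f y"
    "f (sum h A) = (\<Sum>a\<in>A. f (h a))"
proof -
  show a: "f (x + y) = f x + f y" for x y using assms unfolding Vector_Spaces.linear_iff by blast
  show s: "f (c *s x) = c *s f x" for c x using assms unfolding Vector_Spaces.linear_iff by blast
  show z: "f 0 = 0" using s[of 0 0] by simp
  have "f (x - y) = f (x + (-1) *s y)" by simp
  also have "\<dots> = f x + (-1) *s f y" by (simp only: a s)
  also have "\<dots> = f x - f y" by simp
  finally show "f (x - y) = f x - f y" .
  show "f (sum h A) = (\<Sum>a\<in>A. f (h a))"
    by (induct A rule: infinite_finite_induct) (simp_all add: z a)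
qed

context
  fixes S and f :: "'v \<Rightarrow> 'v"
  assumes S: "subspace S" and lf: "Vector_Spaces.linear scale scale f" and inv: "f ` S \<subseteq> S"
begin

definition "K = ker_in S f"
definition "R = f ` S"

lemma subK: "subspace K"
  unfolding K_def ker_in_def subspace_def using S lin_facts[OF lf]
  by (auto simp: subspace_0 subspace_add subspace_scale)

lemma KS: "K \<subseteq> S" unfolding K_def ker_in_def by auto

lemma subR: "subspace R"
  unfolding R_def subspace_def
proof (intro conjI ballI allI)
  show "0 \<in> f ` S" using S lin_facts[OF lf] subspace_0 by (metis image_eqI)
  fix x y assume "x \<in> f ` S" "y \<in> f ` S"
  then obtain a b where "a \<in> S" "b \<in> S" "x = f a" "y = f b" by auto
  then show "x + y \<in> f ` S" using S lin_facts[OF lf] subspace_add by (metis image_eqI)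
next
  fix c x assume "x \<in> f ` S"
  then obtain a where "a \<in> S" "x = f a" by auto
  then show "c *s x \<in> f ` S" using S lin_facts[OF lf] subspace_scale by (metis image_eqI)
qed

lemma RS: "R \<subseteq> S" unfolding R_def using inv .

definition "Q y = (SOME w. w \<in> S \<inter> orthset K \<and> f w = y)"

lemma Q_unique: "w1 \<in> S \<inter> orthset K \<Longrightarrow> w2 \<in> S \<inter> orthset K \<Longrightarrow> f w1 = f w2 \<Longrightarrow> w1 = w2"
proof -
  assume a: "w1 \<in> S \<inter> orthset K" "w2 \<in> S \<inter> orthset K" "f w1 = f w2"
  have "w1 - w2 \<in> S" using a S subspace_diff by blast
  moreover have "f (w1 - w2) = 0" using a lin_facts[OF lf] by simp
  ultimately have k: "w1 - w2 \<in> K" unfolding K_def ker_in_def by auto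
  have "w1 - w2 \<in> orthset K" using a subspace_orthset subspace_diff by blast
  then have "g (w1 - w2) (w1 - w2) = 0" using k unfolding orthset_def by auto
  then show ?thesis using gself[of "w1 - w2"] by simp
qed

lemma Q_prop: assumes "y \<in> R" shows "Q y \<in> S \<inter> orthset K \<and> f (Q y) = y"
proof -
  obtain s where s: "s \<in> S" "y = f s" using assms unfolding R_def by auto
  have "s - pr K s \<in> S" using pr_prop[OF subK] KS S s subspace_diff by blast
  moreover have "s - pr K s \<in> orthset K" using pr_prop[OF subK] by blast
  moreover have "f (s - pr K s) = y"
    using pr_prop[OF subK, of s] s lin_facts[OF lf] unfolding K_def ker_in_def by auto
  ultimately show ?thesis unfolding Q_def by (rule someI[where x="s - pr K s", OF conjI[OF IntI]])
qed

lemma Q_eq: "y \<in> R \<Longrightarrow> w \<in> S \<inter> orthset K \<Longrightarrow> f w = y \<Longrightarrow> Q y = w"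
  using Q_prop Q_unique by metis

definition "h0 x = (if x \<in> S then Q (pr R x) else 0)"

lemma h0_ok: "mp_ok S f h0"
  unfolding mp_ok_def
proof (intro conjI ballI allI impI)
  show "linear_on scale S h0" unfolding linear_on_def
  proof (intro allI impI)
    fix a x y assume xy: "x \<in> S" "y \<in> S"
    have px: "pr R x \<in> R" and py: "pr R y \<in> R" using pr_prop[OF subR] by auto
    have "h0 (a *s x + y) = Q (a *s pr R x + pr R y)"
      unfolding h0_def using xy S by (simp add: subspace_add subspace_scale pr_lin[OF subR])
    also have "\<dots> = a *s Q (pr R x) + Q (pr R y)"
    proof (rule Q_eq)
      show "a *s pr R x + pr R y \<in> R" using px py subR by (simp add: subspace_add subspace_scale)
      show "a *s Q (pr R x) + Q (pr R y) \<in> S \<inter> orthset K"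
        using Q_prop[OF px] Q_prop[OF py] S subspace_orthset
        by (simp add: subspace_add subspace_scale)
      show "f (a *s Q (pr R x) + Q (pr R y)) = a *s pr R x + pr R y"
        using Q_prop[OF px] Q_prop[OF py] lin_facts[OF lf] by simp
    qed
    also have "\<dots> = a *s h0 x + h0 y" unfolding h0_def using xy by simp
    finally show "h0 (a *s x + y) = a *s h0 x + h0 y" .
  qed
next
  fix x assume "x \<notin> S" then show "h0 x = 0" unfolding h0_def by simp
next
  fix y assume y: "y \<in> f ` S"
  then have yR: "y \<in> R" unfolding R_def .
  have "pr R y = y" using pr_eq[OF subR yR] subspace_orthset subspace_0 by simp
  moreover have "y \<in> S" using yR RS by blast
  ultimately have "h0 y = Q y" unfolding h0_def by simp
  then show "h0 y \<in> orth_in g S (ker_in S f)" "f (h0 y) = y"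
    using Q_prop[OF yR] unfolding orth_in_eq K_def by auto
next
  fix y assume y: "y \<in> orth_in g S (f ` S)"
  then have "pr R y = 0" using pr_eq[OF subR] subR subspace_0 unfolding orth_in_eq R_def by auto
  moreover have "Q 0 = 0" using Q_eq subR subspace_0 S subspace_orthset lin_facts[OF lf] by simp
  ultimately show "h0 y = 0" unfolding h0_def by simp
qed

lemma ok_eq_h0: assumes "mp_ok S f h" shows "h = h0"
proof
  fix x
  show "h x = h0 x"
  proof (cases "x \<in> S")
    case False then show ?thesis using assms unfolding mp_ok_def h0_def by simp
  next
    case True
    define p where "p = pr R x"
    have pR: "p \<in> R" and z: "x - p \<in> orthset R" using pr_prop[OF subR] p_def by auto
    have pS: "p \<in> S" using pR RS by blast
    have zS: "x - p \<in> S" using True pS S subspace_diff by blast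
    have "h x = h (1 *s p + (x - p))" by simp
    also have "\<dots> = 1 *s h p + h (x - p)" using assms pS zS unfolding mp_ok_def linear_on_def by blast
    also have "h (x - p) = 0" using assms z zS unfolding mp_ok_def orth_in_eq R_def by blast
    finally have hx: "h x = h p" by simp
    have "h p = Q p"
      using assms pR Q_eq[OF pR, of "h p"] unfolding mp_ok_def R_def orth_in_eq K_def by auto
    then show ?thesis using hx True p_def unfolding h0_def by simp
  qed
qed

lemma MP_ok: "mp_ok S f (MP_inverse_on scale g S f)"
proof -
  have "mp_ok S f (THE h. mp_ok S f h)"
    using h0_ok ok_eq_h0 by (rule theI)
  then show ?thesis unfolding MP_inverse_on_def mp_ok_def .
qed

lemma MP_eq: "mp_ok S f h \<Longrightarrow> MP_inverse_on scale g S f = h"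
  using MP_ok ok_eq_h0 by metis

end

end

locale glue = ips scale Bas cj g
  for scale :: "'k::real_field \<Rightarrow> 'v::ab_group_add \<Rightarrow> 'v" (infixr \<open>*s\<close> 75) and Bas cj g +
  fixes f :: "'v \<Rightarrow> 'v" and H :: "nat \<Rightarrow> 'v set" and I :: "nat set"
  assumes finI: "finite I"
    and lf: "Vector_Spaces.linear scale scale f"
    and subH: "\<forall>i\<in>I. subspace (H i)"
    and invH: "\<forall>i\<in>I. f ` H i \<subseteq> H i"
    and ds: "is_direct_sum H I"
    and orthH: "\<forall>i\<in>I. H i \<subseteq> orth_in g UNIV (sum_subspaces H (I - {i}))"
begin

definition "D x = (SOME x'. (\<forall>i\<in>I. x' i \<in> H i) \<and> x = sum x' I)"

lemma D_prop: "(\<forall>i\<in>I. D x i \<in> H i) \<and> x = sum (D x) I"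
proof -
  obtain x' where "(\<forall>i\<in>I. x' i \<in> H i) \<and> x = sum x' I" using ds unfolding is_direct_sum_def by blast
  then show ?thesis unfolding D_def by (rule someI[where P="\<lambda>x'. (\<forall>i\<in>I. x' i \<in> H i) \<and> x = sum x' I"])
qed

lemma D_sum: "sum (D x) I = x" using D_prop[of x] by (metis (no_types))
lemma D_mem: "i \<in> I \<Longrightarrow> D x i \<in> H i" using D_prop[of x] by blast

lemma D_eq: "(\<forall>i\<in>I. y i \<in> H i) \<Longrightarrow> x = sum y I \<Longrightarrow> i \<in> I \<Longrightarrow> D x i = y i"
proof -
  assume a: "\<forall>i\<in>I. y i \<in> H i" "x = sum y I" "i \<in> I"
  have "\<forall>i\<in>I. D x i \<in> H i \<and> y i \<in> H i" using a D_mem by blast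
  moreover have "sum (D x) I = sum y I" using a D_sum by simp
  ultimately show ?thesis using ds a(3) unfolding is_direct_sum_def by blast
qed

lemma D_0: "i \<in> I \<Longrightarrow> D 0 i = 0"
  using D_eq[of "\<lambda>_. 0" 0 i] subH subspace_0 by simp

lemma cross: assumes "i \<in> I" "j \<in> I" "i \<noteq> j" "u \<in> H j" "w \<in> H i" shows "g u w = 0"
proof -
  have "u \<in> sum_subspaces H (I - {i})"
    unfolding sum_subspaces_def
  proof (intro CollectI exI[of _ "\<lambda>l. if l = j then u else 0"] conjI ballI)
    show "u = (\<Sum>l\<in>I - {i}. if l = j then u else 0)" using assms finI by simp
    fix l assume "l \<in> I - {i}"
    then show "(if l = j then u else 0) \<in> H l" using assms subH subspace_0 by auto
  qed
  then show ?thesis using orthH assms unfolding orth_in_def by blast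
qed

definition "P i = MP_inverse_on scale g (H i) f"

lemma Pok: "i \<in> I \<Longrightarrow> mp_ok (H i) f (P i)"
proof -
  assume i: "i \<in> I"
  have a: "subspace (H i)" using subH i by blast
  have b: "f ` H i \<subseteq> H i" using invH i by blast
  show ?thesis unfolding P_def by (rule MP_ok[OF a lf b])
qed

lemma P0: "i \<in> I \<Longrightarrow> P i 0 = 0"
proof -
  assume i: "i \<in> I"
  have l: "linear_on scale (H i) (P i)" using Pok[OF i] unfolding mp_ok_def by blast
  have z: "0 \<in> H i" using subH i subspace_0 by blast
  have "P i (1 *s 0 + 0) = 1 *s P i 0 + P i 0"
    using l z unfolding linear_on_def by blast
  then show ?thesis by simp
qed

definition "G x = (\<Sum>i\<in>I. P i (D x i))"

lemma D_lin: "i \<in> I \<Longrightarrow> D (a *s x + y) i = a *s D x i + D y i"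
proof (rule D_eq)
  show "\<forall>i\<in>I. a *s D x i + D y i \<in> H i"
    using D_mem subH by (simp add: subspace_add subspace_scale)
  show "a *s x + y = (\<Sum>i\<in>I. a *s D x i + D y i)"
  proof -
    have "(\<Sum>i\<in>I. a *s D x i + D y i) = (\<Sum>i\<in>I. a *s D x i) + sum (D y) I" by (rule sum.distrib)
    also have "(\<Sum>i\<in>I. a *s D x i) = a *s sum (D x) I" by (rule scale_sum_right[symmetric])
    finally show ?thesis by (simp add: D_sum)
  qed
qed

lemma D_f: "i \<in> I \<Longrightarrow> D (f e) i = f (D e i)"
proof (rule D_eq)
  show "\<forall>i\<in>I. f (D e i) \<in> H i" using D_mem invH by blast
  show "f e = (\<Sum>i\<in>I. f (D e i))" using lin_facts(5)[OF lf, of "D e" I] by (simp add: D_sum)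
qed

lemma G_lin: "G (a *s x + y) = a *s G x + G y"
proof -
  have "G (a *s x + y) = (\<Sum>i\<in>I. a *s P i (D x i) + P i (D y i))"
    unfolding G_def
  proof (rule sum.cong[OF refl])
    fix i assume i: "i \<in> I"
    show "P i (D (a *s x + y) i) = a *s P i (D x i) + P i (D y i)"
      using D_lin[OF i] Pok[OF i] D_mem[OF i] unfolding mp_ok_def linear_on_def by simp
  qed
  also have "\<dots> = a *s G x + G y" unfolding G_def by (simp add: sum.distrib scale_sum_right)
  finally show ?thesis .
qed

lemma G_ok: "mp_ok UNIV f G"
  unfolding mp_ok_def
proof (intro conjI ballI allI impI)
  show "linear_on scale UNIV G" unfolding linear_on_def using G_lin by blast
next
  fix x :: 'v assume "x \<notin> UNIV" then show "G x = 0" by simp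
next
  fix y assume "y \<in> f ` UNIV"
  then obtain e where y: "y = f e" by auto
  have Dy: "D y i = f (D e i)" if "i \<in> I" for i using D_f that y by simp
  define w where "w i = P i (D y i)" for i
  have wprop: "w i \<in> orth_in g (H i) (ker_in (H i) f) \<and> f (w i) = D y i" if i: "i \<in> I" for i
  proof -
    have "D y i \<in> f ` H i" using Dy[OF i] D_mem[OF i] by blast
    then show ?thesis using Pok[OF i] unfolding mp_ok_def w_def by blast
  qed
  have "f (G y) = (\<Sum>i\<in>I. f (w i))" unfolding G_def w_def by (rule lin_facts(5)[OF lf])
  also have "\<dots> = (\<Sum>i\<in>I. D y i)" using wprop by simp
  also have "\<dots> = y" by (rule D_sum)
  finally show "f (G y) = y" .
  show "G y \<in> orth_in g UNIV (ker_in UNIV f)"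
    unfolding orth_in_def
  proof (intro CollectI conjI UNIV_I ballI)
    fix k assume "k \<in> ker_in UNIV f"
    then have fk: "f k = 0" unfolding ker_in_def by simp
    have Dk: "D k j \<in> ker_in (H j) f" if j: "j \<in> I" for j
      using D_f[OF j, of k] fk D_0[OF j] D_mem[OF j, of k] unfolding ker_in_def by simp
    have gw: "g (w i) k = 0" if i: "i \<in> I" for i
    proof -
      have "g k (w i) = (\<Sum>j\<in>I. g (D k j) (w i))"
        using g_sum[of "D k" I "w i"] by (simp add: D_sum)
      also have "\<dots> = 0"
      proof (rule sum.neutral, rule ballI)
        fix j assume j: "j \<in> I"
        have wH: "w i \<in> H i" using wprop[OF i] unfolding orth_in_def by blast
        show "g (D k j) (w i) = 0"
        proof (cases "j = i")
          case True then show ?thesis using Dk[OF j] wprop[OF i] unfolding orth_in_def by blast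
        next
          case False then show ?thesis using cross[OF i j] wH D_mem[OF j] by metis
        qed
      qed
      finally show ?thesis by (rule flip)
    qed
    have "g (G y) k = (\<Sum>i\<in>I. g (w i) k)" unfolding G_def w_def by (rule g_sum)
    also have "\<dots> = 0" using gw by simp
    finally show "g k (G y) = 0" by (rule flip)
  qed
next
  fix y assume y: "y \<in> orth_in g UNIV (f ` UNIV)"
  have "P i (D y i) = 0" if i: "i \<in> I" for i
  proof -
    have "D y i \<in> orth_in g (H i) (f ` H i)"
      unfolding orth_in_def
    proof (intro CollectI conjI ballI)
      show "D y i \<in> H i" using D_mem i by blast
      fix u assume "u \<in> f ` H i"
      then have uH: "u \<in> H i" and guy: "g u y = 0" using invH i y unfolding orth_in_def by auto
      from guy have "g y u = 0" by (rule flip)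
      then have "0 = g y u" by simp
      also have "\<dots> = (\<Sum>j\<in>I. g (D y j) u)" using g_sum[of "D y" I u] by (simp add: D_sum)
      also have "\<dots> = g (D y i) u + (\<Sum>j\<in>I - {i}. g (D y j) u)"
        using finI i by (simp add: sum.remove)
      also have "(\<Sum>j\<in>I - {i}. g (D y j) u) = 0"
      proof (rule sum.neutral, rule ballI)
        fix j assume "j \<in> I - {i}"
        then show "g (D y j) u = 0" using cross[OF i, of j] uH D_mem by blast
      qed
      finally have "g (D y i) u = 0" by simp
      then show "g u (D y i) = 0" by (rule flip)
    qed
    then show ?thesis using Pok[OF i] unfolding mp_ok_def by blast
  qed
  then show "G y = 0" unfolding G_def by simp
qed

lemma MP_G: "MP_inverse scale g f = G"
  unfolding MP_inverse_def by (rule MP_eq[OF subspace_UNIV lf _ G_ok]) simp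

lemma G_linear: "Vector_Spaces.linear scale scale G"
proof -
  have vs: "vector_space scale" using lf unfolding Vector_Spaces.linear_iff by blast
  have G0: "G 0 = 0" using G_lin[of 1 0 0] by simp
  have "G (x + y) = G x + G y" for x y using G_lin[of 1 x y] by simp
  moreover have "G (c *s x) = c *s G x" for c x using G_lin[of c x 0] G0 by simp
  ultimately show ?thesis unfolding Vector_Spaces.linear_iff using vs by blast
qed

lemma G_H: assumes i: "i \<in> I" and x: "x \<in> H i" shows "G x = P i x"
proof -
  have D: "D x j = (if j = i then x else 0)" if j: "j \<in> I" for j
  proof (rule D_eq[OF _ _ j])
    show "\<forall>j\<in>I. (if j = i then x else 0) \<in> H j" using x subH subspace_0 by auto
    show "x = (\<Sum>j\<in>I. if j = i then x else 0)" using finI i by simp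
  qed
  have "G x = (\<Sum>j\<in>I. if j = i then P i x else 0)"
    unfolding G_def by (rule sum.cong[OF refl]) (simp add: D P0)
  also have "\<dots> = P i x" using finI i by simp
  finally show ?thesis .
qed

lemma G_unique:
  assumes "Vector_Spaces.linear scale scale h" "\<forall>i\<in>I. \<forall>x\<in>H i. h x = P i x"
  shows "h = G"
proof
  fix e
  have "h e = h (sum (D e) I)" by (simp add: D_sum)
  also have "\<dots> = (\<Sum>j\<in>I. h (D e j))" by (rule lin_facts(5)[OF assms(1)])
  also have "\<dots> = G e" unfolding G_def using assms(2) D_mem by (intro sum.cong) auto
  finally show "h e = G e" .
qed

lemma adapted_G: "adapted_inverse scale g f H I = G"
  unfolding adapted_inverse_def
proof (rule the_equality)
  show "Vector_Spaces.linear scale scale G \<and> (\<forall>i\<in>I. \<forall>x\<in>H i. G x = MP_inverse_on scale g (H i) f x)"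
    using G_linear G_H unfolding P_def by blast
next
  fix h assume "Vector_Spaces.linear scale scale h \<and> (\<forall>i\<in>I. \<forall>x\<in>H i. h x = MP_inverse_on scale g (H i) f x)"
  then show "h = G" using G_unique unfolding P_def by blast
qed

end

theorem proposition3p9:
  fixes scale :: "'k::real_field \<Rightarrow> 'v::ab_group_add \<Rightarrow> 'v"
    and cj :: "'k \<Rightarrow> 'k"
    and g :: "'v \<Rightarrow> 'v \<Rightarrow> 'k"
    and f :: "'v \<Rightarrow> 'v"
    and H :: "nat \<Rightarrow> 'v set"
    and n :: nat
  assumes "RorC cj"
    and "inner_product_space scale cj g"
    and "\<exists>B. finite_dimensional_vector_space scale B"
    and "Vector_Spaces.linear scale scale f"
    and "\<forall>i\<in>{1..n}. module.subspace scale (H i)"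
    and "\<forall>i\<in>{1..n}. f ` H i \<subseteq> H i"
    and "is_direct_sum H {1..n}"
    and "\<forall>i\<in>{1..n}. H i \<subseteq> orth_in g UNIV (sum_subspaces H ({1..n} - {i}))"
  shows "adapted_inverse scale g f H {1..n} = MP_inverse scale g f"
proof -
  obtain Bas where fd: "finite_dimensional_vector_space scale Bas" using assms(3) by blast
  have ip: "(\<forall>a u v w. g (scale a u + v) w = a * g u w + g v w) \<and>
     (\<forall>u v. g u v = cj (g v u)) \<and>
     (\<forall>e. e \<noteq> 0 \<longrightarrow> (\<exists>r>0. g e e = of_real r))"
    using assms(2) unfolding inner_product_space_def by blast
  have ips: "ips scale Bas cj g"
    unfolding ips_def ips_axioms_def
  proof (intro conjI allI impI)
    show "finite_dimensional_vector_space scale Bas" by (rule fd)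
    show "g (scale a u + v) w = a * g u w + g v w" for a u v w using ip by blast
    show "g u v = cj (g v u)" for u v using ip by blast
    show "e \<noteq> 0 \<Longrightarrow> \<exists>r>0. g e e = of_real r" for e using ip by blast
  qed
  have "glue scale Bas cj g f H {1..n}"
    unfolding glue_def glue_axioms_def
  proof (intro conjI)
    show "ips scale Bas cj g" by (rule ips)
  qed (rule finite_atLeastAtMost assms(4-8))+
  then interpret glue scale Bas cj g f H "{1..n}" .
  show ?thesis using adapted_G MP_G by simp
qed

end
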